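(* Let $\mathcal{H}^S$ and $\mathcal{H}^A$ be $d$-dimensional Hilbert spaces with fixed orthonormal bases. There exists an isometry $W:\mathcal{H}^S\to\mathcal{H}^S\otimes\mathcal{H}^A$ such that for every state $\rho^S$ on $\mathcal{H}^S$, \[ \mathcal{L}_C(\rho^S)=\mathcal{L}_E(W\rho^SW^\dagger). \]
   Context: The coherence rank $R_C(|\psi\rangle)$ of a pure state $|\psi\rangle\in\mathcal{H}^S$ is the number of nonzero coefficients of $|\psi\rangle$ in the fixed basis; $\mathcal{L}_C(|\psi\rangle)=\log_2R_C(|\psi\rangle)$; for a state $\rho$, $\mathcal{L}_C(\rho)=\min\sum_ip_i\mathcal{L}_C(|\psi_i\rangle)$ over all pure-state decompositions $\rho=\sum_ip_i|\psi_i\rangle\langle\psi_i|$. For a bipartite pure state $|\psi^{SA}\rangle$ with Schmidt rank $r$, $\mathcal{L}_E(|\psi^{SA}\rangle)=\log_2r$, and for a bipartite state $\rho^{SA}$, $\mathcal{L}_E(\rho^{SA})=\min\sum_ip_i\mathcal{L}_E(|\psi_i^{SA}\rangle)$ over all pure-state decompositions of $\rho^{SA}$. *)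

theory Defs
  imports "Jordan_Normal_Form.DL_Rank" "Jordan_Normal_Form.Schur_Decomposition"
begin

text \<open>Hilbert space H^S = C^d with the computational (fixed orthonormal) basis e_0..e_(d-1);
  H^S \<otimes> H^A = C^(d*d), where the basis vector e_i \<otimes> e_j has index i*d + j.\<close>

definition coh_rank :: "complex vec \<Rightarrow> nat" where
  "coh_rank v = card {i. i < dim_vec v \<and> v $ i \<noteq> 0}"

definition LC_pure :: "complex vec \<Rightarrow> real" where
  "LC_pure v = log 2 (real (coh_rank v))"

definition coeff_mat :: "nat \<Rightarrow> complex vec \<Rightarrow> complex mat" where
  "coeff_mat d psi = mat d d (\<lambda>(i, j). psi $ (i * d + j))"

definition schmidt_rank :: "nat \<Rightarrow> complex vec \<Rightarrow> nat" where
  "schmidt_rank d psi = vec_space.rank d (coeff_mat d psi)"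

definition LE_pure :: "nat \<Rightarrow> complex vec \<Rightarrow> real" where
  "LE_pure d psi = log 2 (real (schmidt_rank d psi))"

definition unit_vec_c :: "nat \<Rightarrow> complex vec \<Rightarrow> bool" where
  "unit_vec_c n v \<longleftrightarrow> v \<in> carrier_vec n \<and> (\<Sum>j<n. (cmod (v $ j))\<^sup>2) = 1"

definition density_mat :: "nat \<Rightarrow> complex mat \<Rightarrow> bool" where
  "density_mat n \<rho> \<longleftrightarrow> \<rho> \<in> carrier_mat n n \<and> mat_adjoint \<rho> = \<rho> \<and>
     (\<forall>v \<in> carrier_vec n. conjugate v \<bullet> (\<rho> *\<^sub>v v) \<in> \<real> \<and> 0 \<le> Re (conjugate v \<bullet> (\<rho> *\<^sub>v v))) \<and>
     (\<Sum>i<n. \<rho> $$ (i, i)) = 1"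

definition pure_decomp :: "nat \<Rightarrow> complex mat \<Rightarrow> nat \<Rightarrow> (nat \<Rightarrow> real) \<Rightarrow> (nat \<Rightarrow> complex vec) \<Rightarrow> bool" where
  "pure_decomp n \<rho> k p \<psi> \<longleftrightarrow>
     (\<forall>i<k. 0 \<le> p i \<and> unit_vec_c n (\<psi> i)) \<and> (\<Sum>i<k. p i) = 1 \<and>
     \<rho> = mat n n (\<lambda>(a, b). \<Sum>i<k. complex_of_real (p i) * (\<psi> i $ a) * cnj (\<psi> i $ b))"

definition LC :: "nat \<Rightarrow> complex mat \<Rightarrow> real" where
  "LC n \<rho> = Inf {(\<Sum>i<k. p i * LC_pure (\<psi> i)) | k p \<psi>. pure_decomp n \<rho> k p \<psi>}"

definition LE :: "nat \<Rightarrow> complex mat \<Rightarrow> real" where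
  "LE d \<rho> = Inf {(\<Sum>i<k. p i * LE_pure d (\<psi> i)) | k p \<psi>. pure_decomp (d * d) \<rho> k p \<psi>}"

end

theory Submission imports Defs "Jordan_Normal_Form.DL_Rank_Submatrix" begin

lemma t1: "mat n n (\<lambda>(i,j). if i = j \<and> i \<in> {} then (c::nat\<Rightarrow>complex) i else 0) = (0\<^sub>m n n :: complex mat)"
    by (rule eq_matI) auto

lemma t2: assumes "x \<notin> S" shows "mat n n (\<lambda>(i,j). if i = j \<and> i \<in> insert x S then (c::nat\<Rightarrow>complex) i else 0) = mat n n (\<lambda>(i,j). if i = j \<and> i \<in> S then c i else 0) + mat n n (\<lambda>(i,j). (if i = x then c x else 0) * (if j = x then 1 else 0))"
    by (rule eq_matI) (use assms in auto)
lemma t3: "vec_space.rank n (mat n n (\<lambda>(i,j). (if i = x then (c::nat\<Rightarrow>complex) x else 0) * (if j = x then 1 else 0))) \<le> 1"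
    by (rule vec_space.rank_le_1_product_entries[of _ n n "\<lambda>r. if r = x then c x else 0" "\<lambda>j. if j = x then 1 else 0"]) auto

lemma t4: "vec_space.rank n ((A::complex mat) + B) \<le> vec_space.rank n A + vec_space.rank n B" if "A \<in> carrier_mat n n" "B \<in> carrier_mat n n"
    by (rule vec_space.rank_subadditive) (use that in auto)
lemma t5: "vec_space.rank n (0\<^sub>m n n :: complex mat) = 0" by (rule vec_space.rank_0I)

lemma dmat_upper:
  fixes c :: "nat \<Rightarrow> complex"
  assumes "finite S"
  shows "vec_space.rank n (mat n n (\<lambda>(i,j). if i = j \<and> i \<in> S then c i else 0)) \<le> card S"
  using assms
proof (induction S rule: finite_induct)
  case empty
  show ?case unfolding t1 t5 by simp
next
  case (insert x S)
  have "vec_space.rank n (mat n n (\<lambda>(i,j). if i = j \<and> i \<in> insert x S then c i else 0))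
     \<le> vec_space.rank n (mat n n (\<lambda>(i,j). if i = j \<and> i \<in> S then c i else 0)) + 
       vec_space.rank n (mat n n (\<lambda>(i,j). (if i = x then (c::nat\<Rightarrow>complex) x else 0) * (if j = x then 1 else 0)))"
    unfolding t2[OF insert(2)] by (rule t4) auto
  also have "\<dots> \<le> card S + 1" using insert(3) t3[of n x c] by linarith
  finally show ?case using insert(1,2) by simp
qed
definition dmat :: "nat \<Rightarrow> (nat \<Rightarrow> complex) \<Rightarrow> complex mat" where
  "dmat n c = mat n n (\<lambda>(i,j). if i = j then c i else 0)"

lemma dmat_lower:
  fixes c :: "nat \<Rightarrow> complex"
  shows "card {i. i < n \<and> c i \<noteq> 0} \<le> vec_space.rank n (dmat n c)"
proof -
  define I where "I = {i. i < n \<and> c i \<noteq> 0} \<union> {n..}"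
  have inf: "infinite I" unfolding I_def by (simp add: infinite_Ici)
  have cI: "{i. i < n \<and> i \<in> I} = {i. i < n \<and> c i \<noteq> 0}" unfolding I_def by auto
  let ?m = "card {i. i < n \<and> c i \<noteq> 0}"
  have pl: "pick I i < n" if "i < ?m" for i using pick_le[of i n I] that cI by auto
  have pc: "c (pick I i) \<noteq> 0" if "i < ?m" for i
    using pl[OF that] pick_in_set_inf[OF inf, of i] unfolding I_def by auto
  have sub: "submatrix (dmat n c) I I = mat ?m ?m (\<lambda>(i,j). if i = j then c (pick I i) else 0)"
  proof (rule eq_matI)
    fix i j assume ij: "i < dim_row (mat ?m ?m (\<lambda>(i,j). if i = j then c (pick I i) else 0))"
      "j < dim_col (mat ?m ?m (\<lambda>(i,j). if i = j then c (pick I i) else 0))"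
    then have "i < ?m" "j < ?m" by auto
    have inj: "(pick I i = pick I j) = (i = j)" using pick_eq_iff_inf[OF inf, of i j] by simp
    show "submatrix (dmat n c) I I $$ (i, j) = mat ?m ?m (\<lambda>(i,j). if i = j then c (pick I i) else 0) $$ (i, j)"
      unfolding submatrix_def dmat_def using cI pl[OF \<open>i < ?m\<close>] pl[OF \<open>j < ?m\<close>] \<open>i < ?m\<close> \<open>j < ?m\<close> inj
      by simp
  qed (auto simp: submatrix_def dmat_def cI)
  have ut: "upper_triangular (submatrix (dmat n c) I I)" unfolding sub
    by (auto simp: upper_triangular_def)
  have "det (submatrix (dmat n c) I I) = prod_list (diag_mat (submatrix (dmat n c) I I))"
    by (rule det_upper_triangular[OF ut, of ?m]) (simp add: sub)
  also have "\<dots> \<noteq> 0" unfolding sub prod_list_zero_iff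
    by (auto simp: diag_mat_def pc)
  finally have "det (submatrix (dmat n c) I I) \<noteq> 0" .
  from vec_space.rank_gt_minor[OF _ this, of n n]
  show ?thesis using cI by (simp add: dmat_def)
qed

lemma dmat_rank:
  fixes c :: "nat \<Rightarrow> complex"
  shows "vec_space.rank n (dmat n c) = card {i. i < n \<and> c i \<noteq> 0}"
proof -
  have "dmat n c = mat n n (\<lambda>(i,j). if i = j \<and> i \<in> {i. i < n \<and> c i \<noteq> 0} then c i else 0)"
    unfolding dmat_def by (rule eq_matI) auto
  then have "vec_space.rank n (dmat n c) \<le> card {i. i < n \<and> c i \<noteq> 0}"
    using dmat_upper[of "{i. i < n \<and> c i \<noteq> 0}" n c] by simp
  with dmat_lower[of n c] show ?thesis by simp
qed


lemma adj_dims[simp]: "dim_row (mat_adjoint A) = dim_col A" "dim_col (mat_adjoint A) = dim_row A"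
  unfolding mat_adjoint_def by auto

lemma adj_index[simp]: "i < dim_col A \<Longrightarrow> j < dim_row A \<Longrightarrow> mat_adjoint (A :: complex mat) $$ (i,j) = cnj (A $$ (j,i))"
  unfolding mat_adjoint_def by (simp add: mat_of_rows_def)

definition Wm :: "nat \<Rightarrow> complex mat" where
  "Wm d = mat (d*d) d (\<lambda>(a,k). if a div d = k \<and> a mod d = k then 1 else 0)"

lemma sumS: "(a::nat) < d*d \<Longrightarrow> (\<Sum>k<d. (if a div d = k \<and> a mod d = k then f k else 0)) = (if a div d = a mod d then f (a div d) else (0::'b::comm_monoid_add))"
proof (cases "a div d = a mod d")
  case True
  assume a: "a < d*d"
  then have "a div d < d" by (simp add: less_mult_imp_div_less)
  have "(\<Sum>k<d. (if a div d = k \<and> a mod d = k then f k else 0)) = (\<Sum>k<d. (if a div d = k then f k else 0))"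
    using True by (intro sum.cong) auto
  also have "\<dots> = f (a div d)" using \<open>a div d < d\<close> by (simp add: sum.delta)
  finally show ?thesis using True by simp
next
  case False
  then show ?thesis by (intro trans[OF sum.neutral]) auto
qed

lemma diag_iff: assumes "(k::nat) < d" shows "(a div d = k \<and> a mod d = k) = (a = k*d+k)"
proof
  assume "a div d = k \<and> a mod d = k"
  then show "a = k*d+k" using div_mult_mod_eq[of a d] by simp
next
  assume a: "a = k*d+k"
  have "d > 0" using assms by simp
  have "(k + k*d) div d = k" using assms \<open>d>0\<close> by simp
  moreover have "(k + k*d) mod d = k" using assms by simp
  ultimately show "a div d = k \<and> a mod d = k" using a by (simp add: add.commute)
qed

lemma kk_div[simp]: "(k::nat) < d \<Longrightarrow> (k*d+k) div d = k" and kk_mod[simp]: "k < d \<Longrightarrow> (k*d+k) mod d = k"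
  using diag_iff[of k d "k*d+k"] by auto

lemma kk_less: "k < d \<Longrightarrow> k*d+k < d*(d::nat)"
proof -
  assume "k < d"
  then have "k*d + k < k*d + d" by simp
  also have "\<dots> = (k+1)*d" by simp
  also have "\<dots> \<le> d*d" by (rule mult_le_mono1) (use \<open>k<d\<close> in simp)
  finally show ?thesis .
qed

lemma sumG: "(\<Sum>a<(d::nat)*d. (if a div d = a mod d then g a else (0::'b::comm_monoid_add))) = (\<Sum>k<d. g (k*d+k))"
proof -
  have "(\<Sum>a<d*d. (if a div d = a mod d then g a else 0)) = (\<Sum>a\<in>{a. a<d*d \<and> a div d = a mod d}. g a)"
    by (simp add: sum.If_cases lessThan_def Collect_conj_eq Int_commute)
  also have "{a. a<d*d \<and> a div d = a mod d} = (\<lambda>k. k*d+k) ` {..<d}"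
  proof
    show "{a. a<d*d \<and> a div d = a mod d} \<subseteq> (\<lambda>k. k*d+k) ` {..<d}"
    proof
      fix a assume "a \<in> {a. a<d*d \<and> a div d = a mod d}"
      then have a: "a < d*d" "a div d = a mod d" by auto
      define k where "k = a div d"
      from a(1) have B: "k < d" unfolding k_def by (rule less_mult_imp_div_less)
      have A: "a = k*d + k" using a(2) div_mult_mod_eq[of a d] unfolding k_def by simp
      show "a \<in> (\<lambda>k. k*d+k) ` {..<d}" using A B by auto
    qed
  next
    show "(\<lambda>k. k*d+k) ` {..<d} \<subseteq> {a. a<d*d \<and> a div d = a mod d}"
    proof
      fix a assume "a \<in> (\<lambda>k. k*d+k) ` {..<d}"
      then obtain k where k: "k < d" "a = k*d+k" by blast
      then show "a \<in> {a. a<d*d \<and> a div d = a mod d}" using kk_less[OF k(1)] kk_div[OF k(1)] kk_mod[OF k(1)] by simp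
    qed
  qed
  also have "(\<Sum>a\<in>(\<lambda>k. k*d+k) ` {..<d}. g a) = (\<Sum>k<d. g (k*d+k))"
  proof -
    have "inj_on (\<lambda>k. k*d+k) {..<d}"
    proof (rule inj_onI)
      fix k l assume kl: "k \<in> {..<d}" "l \<in> {..<d}" and eq: "k*d+k = l*d+l"
      have "k = (k*d+k) div d" using kl(1) by simp
      also have "\<dots> = (l*d+l) div d" using eq by (rule arg_cong)
      also have "\<dots> = l" using kl(2) by simp
      finally show "k = l" .
    qed
    then show ?thesis by (simp add: sum.reindex)
  qed
  finally show ?thesis .
qed


lemma W_carrier: "Wm d \<in> carrier_mat (d*d) d" unfolding Wm_def by simp

lemma W_index: "a < d*d \<Longrightarrow> k < d \<Longrightarrow> Wm d $$ (a,k) = (if a div d = k \<and> a mod d = k then 1 else 0)"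
  unfolding Wm_def by simp

lemma W_iso: "mat_adjoint (Wm d) * Wm d = 1\<^sub>m d"
proof (rule eq_matI)
  fix i j assume ij: "i < dim_row (1\<^sub>m d :: complex mat)" "j < dim_col (1\<^sub>m d :: complex mat)"
  then have i: "i < d" and j: "j < d" by auto
  have "(mat_adjoint (Wm d) * Wm d) $$ (i,j) = (\<Sum>a<d*d. mat_adjoint (Wm d) $$ (i,a) * Wm d $$ (a,j))"
    using i j W_carrier[of d] by (simp add: scalar_prod_def lessThan_atLeast0)
  also have "\<dots> = (\<Sum>a<d*d. (if a div d = a mod d then (if a div d = i \<and> a div d = j then 1 else 0) else 0))"
    using i j W_carrier[of d] by (intro sum.cong) (auto simp: W_index)
  also have "\<dots> = (\<Sum>k<d. (if (k*d+k) div d = i \<and> (k*d+k) div d = j then 1 else 0))"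
    by (rule sumG)
  also have "\<dots> = (\<Sum>k<d. (if k = i \<and> k = j then 1 else 0))"
    by (intro sum.cong) auto
  also have "\<dots> = (1\<^sub>m d :: complex mat) $$ (i,j)"
    using i j by (cases "i = j") (auto simp: sum.delta)
  finally show "(mat_adjoint (Wm d) * Wm d) $$ (i,j) = (1\<^sub>m d :: complex mat) $$ (i,j)" .
qed (auto simp: W_carrier[THEN carrier_matD(2)])

lemma Wv: assumes "v \<in> carrier_vec d" "a < d*d"
  shows "(Wm d *\<^sub>v v) $ a = (if a div d = a mod d then v $ (a div d) else 0)"
proof -
  have "(Wm d *\<^sub>v v) $ a = (\<Sum>k<d. Wm d $$ (a,k) * v $ k)"
    using assms W_carrier[of d] by (simp add: scalar_prod_def lessThan_atLeast0)
  also have "\<dots> = (\<Sum>k<d. (if a div d = k \<and> a mod d = k then v $ k else 0))"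
    using assms by (intro sum.cong) (auto simp: W_index)
  also have "\<dots> = (if a div d = a mod d then v $ (a div d) else 0)"
    by (rule sumS[OF assms(2)])
  finally show ?thesis .
qed

declare index_mult_mat_vec[simp del]

lemma W_dims[simp]: "dim_row (Wm d) = d*d" "dim_col (Wm d) = d" unfolding Wm_def by auto

lemma Wv_dim[simp]: "dim_vec (Wm d *\<^sub>v v) = d*d" unfolding Wm_def by simp

lemma WrW: assumes "\<rho> \<in> carrier_mat d d" "a < d*d" "b < d*d"
  shows "(Wm d * \<rho> * mat_adjoint (Wm d)) $$ (a,b) =
    (if a div d = a mod d \<and> b div d = b mod d then \<rho> $$ (a div d, b div d) else 0)"
proof -
  have r: "(Wm d * \<rho>) $$ (a,c) = (if a div d = a mod d then \<rho> $$ (a div d, c) else 0)" if c: "c < d" for c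
  proof -
    have "(Wm d * \<rho>) $$ (a,c) = (\<Sum>k<d. Wm d $$ (a,k) * \<rho> $$ (k,c))"
      using assms c W_carrier[of d] by (simp add: scalar_prod_def lessThan_atLeast0)
    also have "\<dots> = (\<Sum>k<d. (if a div d = k \<and> a mod d = k then \<rho> $$ (k,c) else 0))"
      using assms by (intro sum.cong) (auto simp: W_index)
    also have "\<dots> = (if a div d = a mod d then \<rho> $$ (a div d, c) else 0)"
      by (rule sumS[OF assms(2)])
    finally show ?thesis .
  qed
  have "(Wm d * \<rho> * mat_adjoint (Wm d)) $$ (a,b) = (\<Sum>c<d. (Wm d * \<rho>) $$ (a,c) * mat_adjoint (Wm d) $$ (c,b))"
    using assms W_carrier[of d] by (simp add: scalar_prod_def lessThan_atLeast0)
  also have "\<dots> = (\<Sum>c<d. (if b div d = c \<and> b mod d = c then (if a div d = a mod d then \<rho> $$ (a div d, c) else 0) else 0))"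
  proof (rule sum.cong[OF refl])
    fix c assume "c \<in> {..<d}"
    then have c: "c < d" by simp
    have e: "mat_adjoint (Wm d) $$ (c,b) = (if b div d = c \<and> b mod d = c then 1 else 0)"
      using c assms W_carrier[of d] by (simp add: W_index)
    show "(Wm d * \<rho>) $$ (a,c) * mat_adjoint (Wm d) $$ (c,b) = (if b div d = c \<and> b mod d = c then (if a div d = a mod d then \<rho> $$ (a div d, c) else 0) else 0)"
      by (simp only: r[OF c] e) simp
  qed
  also have "\<dots> = (if b div d = b mod d then (if a div d = a mod d then \<rho> $$ (a div d, b div d) else 0) else 0)"
    by (rule sumS[OF assms(3)])
  finally show ?thesis by simp
qed

lemma WrW_carrier: "\<rho> \<in> carrier_mat d d \<Longrightarrow> Wm d * \<rho> * mat_adjoint (Wm d) \<in> carrier_mat (d*d) (d*d)"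
  using W_carrier[of d] by auto


lemma ij_facts: assumes "(i::nat) < d" "j < d"
  shows "(i*d+j) div d = i" "(i*d+j) mod d = j" "i*d+j < d*d"
proof -
  have "d > 0" using assms by simp
  show "(i*d+j) div d = i" using assms \<open>d>0\<close> by simp
  show "(i*d+j) mod d = j" using assms by simp
  have "i*d+j < i*d + d" using assms by simp
  also have "\<dots> = (i+1)*d" by simp
  also have "\<dots> \<le> d*d" by (rule mult_le_mono1) (use assms in simp)
  finally show "i*d+j < d*d" .
qed

lemma W_norm: assumes "v \<in> carrier_vec d"
  shows "(\<Sum>a<d*d. (cmod ((Wm d *\<^sub>v v) $ a))\<^sup>2) = (\<Sum>j<d. (cmod (v $ j))\<^sup>2)"
proof -
  have "(\<Sum>a<d*d. (cmod ((Wm d *\<^sub>v v) $ a))\<^sup>2) = (\<Sum>a<d*d. (if a div d = a mod d then (cmod (v $ (a div d)))\<^sup>2 else 0))"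
    using assms by (intro sum.cong) (auto simp: Wv)
  also have "\<dots> = (\<Sum>k<d. (cmod (v $ ((k*d+k) div d)))\<^sup>2)" by (rule sumG)
  also have "\<dots> = (\<Sum>j<d. (cmod (v $ j))\<^sup>2)" by (intro sum.cong) auto
  finally show ?thesis .
qed

lemma W_unit: "v \<in> carrier_vec d \<Longrightarrow> unit_vec_c (d*d) (Wm d *\<^sub>v v) = unit_vec_c d v"
  unfolding unit_vec_c_def using W_norm[of v d] W_carrier[of d] by auto

lemma W_LE: assumes "v \<in> carrier_vec d"
  shows "LE_pure d (Wm d *\<^sub>v v) = LC_pure v"
proof -
  have "coeff_mat d (Wm d *\<^sub>v v) = dmat d (\<lambda>i. v $ i)"
  proof (rule eq_matI)
    fix i j assume "i < dim_row (dmat d (\<lambda>i. v $ i))" "j < dim_col (dmat d (\<lambda>i. v $ i))"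
    then have ij: "i < d" "j < d" by (auto simp: dmat_def)
    show "coeff_mat d (Wm d *\<^sub>v v) $$ (i, j) = dmat d (\<lambda>i. v $ i) $$ (i, j)"
      using ij ij_facts[OF ij] by (simp add: coeff_mat_def dmat_def Wv[OF assms])
  qed (auto simp: coeff_mat_def dmat_def)
  then have "schmidt_rank d (Wm d *\<^sub>v v) = coh_rank v"
    unfolding schmidt_rank_def coh_rank_def using assms dmat_rank[of d "\<lambda>i. v $ i"] by simp
  then show ?thesis unfolding LE_pure_def LC_pure_def by simp
qed

lemma dir1:
  assumes rc: "\<rho> \<in> carrier_mat d d" and pd: "pure_decomp d \<rho> k p \<psi>"
  shows "pure_decomp (d*d) (Wm d * \<rho> * mat_adjoint (Wm d)) k p (\<lambda>i. Wm d *\<^sub>v \<psi> i)"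
proof -
  have p: "\<forall>i<k. 0 \<le> p i \<and> unit_vec_c d (\<psi> i)" "(\<Sum>i<k. p i) = 1"
    and r: "\<rho> = mat d d (\<lambda>(a, b). \<Sum>i<k. complex_of_real (p i) * (\<psi> i $ a) * cnj (\<psi> i $ b))"
    using pd unfolding pure_decomp_def by auto
  have car: "\<psi> i \<in> carrier_vec d" if "i < k" for i using p(1) that unfolding unit_vec_c_def by auto
  have u: "\<forall>i<k. 0 \<le> p i \<and> unit_vec_c (d*d) (Wm d *\<^sub>v \<psi> i)" using p(1) W_unit car by auto
  have m: "Wm d * \<rho> * mat_adjoint (Wm d) = mat (d*d) (d*d) (\<lambda>(a, b). \<Sum>i<k. complex_of_real (p i) * ((Wm d *\<^sub>v \<psi> i) $ a) * cnj ((Wm d *\<^sub>v \<psi> i) $ b))"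
  proof (rule eq_matI)
    fix a b assume "a < dim_row (mat (d*d) (d*d) (\<lambda>(a, b). \<Sum>i<k. complex_of_real (p i) * ((Wm d *\<^sub>v \<psi> i) $ a) * cnj ((Wm d *\<^sub>v \<psi> i) $ b)))"
      "b < dim_col (mat (d*d) (d*d) (\<lambda>(a, b). \<Sum>i<k. complex_of_real (p i) * ((Wm d *\<^sub>v \<psi> i) $ a) * cnj ((Wm d *\<^sub>v \<psi> i) $ b)))"
    then have ab: "a < d*d" "b < d*d" by auto
    have ad: "a div d < d" "b div d < d" using ab by (auto intro: less_mult_imp_div_less)
    have rhs: "(\<Sum>i<k. complex_of_real (p i) * ((Wm d *\<^sub>v \<psi> i) $ a) * cnj ((Wm d *\<^sub>v \<psi> i) $ b))
      = (\<Sum>i<k. (if a div d = a mod d \<and> b div d = b mod d then complex_of_real (p i) * (\<psi> i $ (a div d)) * cnj (\<psi> i $ (b div d)) else 0))"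
      by (intro sum.cong) (auto simp: Wv[OF car ab(1)] Wv[OF car ab(2)])
    show "(Wm d * \<rho> * mat_adjoint (Wm d)) $$ (a, b) = mat (d*d) (d*d) (\<lambda>(a, b). \<Sum>i<k. complex_of_real (p i) * ((Wm d *\<^sub>v \<psi> i) $ a) * cnj ((Wm d *\<^sub>v \<psi> i) $ b)) $$ (a, b)"
      using ab ad unfolding WrW[OF rc ab] index_mat(1)[OF ab] split rhs
    proof -
      have re: "\<rho> $$ (a div d, b div d) = (\<Sum>i<k. complex_of_real (p i) * (\<psi> i $ (a div d)) * cnj (\<psi> i $ (b div d)))"
        using ad by (subst r) simp
      show "(if a div d = a mod d \<and> b div d = b mod d then \<rho> $$ (a div d, b div d) else 0) = (\<Sum>i<k. (if a div d = a mod d \<and> b div d = b mod d then complex_of_real (p i) * (\<psi> i $ (a div d)) * cnj (\<psi> i $ (b div d)) else 0))"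
        using re by auto
    qed
  qed (use rc W_carrier[of d] in auto)
  show ?thesis unfolding pure_decomp_def using u p(2) m by blast
qed


lemma dir2:
  assumes rc: "\<rho> \<in> carrier_mat d d" and pd: "pure_decomp (d*d) (Wm d * \<rho> * mat_adjoint (Wm d)) k p \<phi>"
  shows "\<exists>\<psi>. pure_decomp d \<rho> k p \<psi> \<and> (\<Sum>i<k. p i * LE_pure d (\<phi> i)) = (\<Sum>i<k. p i * LC_pure (\<psi> i))"
proof -
  let ?R = "Wm d * \<rho> * mat_adjoint (Wm d)"
  have p: "\<forall>i<k. 0 \<le> p i \<and> unit_vec_c (d*d) (\<phi> i)" "(\<Sum>i<k. p i) = 1"
    and r: "?R = mat (d*d) (d*d) (\<lambda>(a, b). \<Sum>i<k. complex_of_real (p i) * (\<phi> i $ a) * cnj (\<phi> i $ b))"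
    using pd unfolding pure_decomp_def by auto
  have car: "\<phi> i \<in> carrier_vec (d*d)" if "i < k" for i using p(1) that unfolding unit_vec_c_def by auto
  have "k \<noteq> 0" using p(2) by (cases k) auto
  then have "unit_vec_c (d*d) (\<phi> 0)" using p(1) by auto
  then have "d \<noteq> 0" unfolding unit_vec_c_def by (cases d) auto
  have Rent: "?R $$ (a,b) = (\<Sum>i<k. complex_of_real (p i) * (\<phi> i $ a) * cnj (\<phi> i $ b))"
    if "a < d*d" "b < d*d" for a b
    using that by (subst r) simp
  have zero: "\<phi> i $ a = 0" if i: "i < k" "p i \<noteq> 0" and a: "a < d*d" "a div d \<noteq> a mod d" for i a
  proof -
    have e1: "(\<Sum>j<k. complex_of_real (p j) * (\<phi> j $ a) * cnj (\<phi> j $ a)) = 0"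
      using Rent[OF a(1) a(1)] WrW[OF rc a(1) a(1)] a(2) by simp
    have e2: "(\<Sum>j<k. complex_of_real (p j) * (\<phi> j $ a) * cnj (\<phi> j $ a)) = complex_of_real (\<Sum>j<k. p j * (cmod (\<phi> j $ a))\<^sup>2)"
      unfolding of_real_sum by (intro sum.cong refl) (simp add: complex_norm_square[symmetric] mult.assoc del: of_real_power)
    from e2[symmetric] e1 have "complex_of_real (\<Sum>j<k. p j * (cmod (\<phi> j $ a))\<^sup>2) = 0" by (rule trans)
    then have s0: "(\<Sum>j<k. p j * (cmod (\<phi> j $ a))\<^sup>2) = 0" by (simp only: of_real_eq_0_iff)
    have "\<forall>j\<in>{..<k}. p j * (cmod (\<phi> j $ a))\<^sup>2 = 0"
      using sum_nonneg_eq_0_iff[of "{..<k}" "\<lambda>j. p j * (cmod (\<phi> j $ a))\<^sup>2"] s0 p(1) by auto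
    then have "p i * (cmod (\<phi> i $ a))\<^sup>2 = 0" using i by auto
    then show ?thesis using i(2) by simp
  qed
  define \<psi> where "\<psi> i = (if p i = 0 then unit_vec d 0 else vec d (\<lambda>j. \<phi> i $ (j*d+j)))" for i
  have psi_car: "\<psi> i \<in> carrier_vec d" for i unfolding \<psi>_def by auto
  have phiW: "\<phi> i = Wm d *\<^sub>v \<psi> i" if i: "i < k" "p i \<noteq> 0" for i
  proof (rule eq_vecI)
    show "dim_vec (\<phi> i) = dim_vec (Wm d *\<^sub>v \<psi> i)" using car[OF i(1)] by (simp add: Wm_def)
    fix a assume "a < dim_vec (Wm d *\<^sub>v \<psi> i)"
    then have a: "a < d*d" by simp
    have ad: "a div d < d" using a by (rule less_mult_imp_div_less)
    show "\<phi> i $ a = (Wm d *\<^sub>v \<psi> i) $ a"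
    proof (cases "a div d = a mod d")
      case True
      have "a = (a div d)*d + a div d" using True div_mult_mod_eq[of a d] by simp
      then have "\<phi> i $ a = \<phi> i $ ((a div d)*d + a div d)" by simp
      then show ?thesis unfolding Wv[OF psi_car a] using True i(2) ad by (simp add: \<psi>_def)
    next
      case False
      then show ?thesis unfolding Wv[OF psi_car a] using zero[OF i a] by simp
    qed
  qed
  have u: "unit_vec_c d (\<psi> i)" if i: "i < k" for i
  proof (cases "p i = 0")
    case True
    have "(\<Sum>j<d. (cmod (unit_vec d 0 $ j))\<^sup>2) = (\<Sum>j<d. if j = 0 then 1 else 0)"
      by (intro sum.cong) auto
    also have "\<dots> = 1" using \<open>d \<noteq> 0\<close> by (simp add: sum.delta)
    finally show ?thesis using True unfolding unit_vec_c_def \<psi>_def by simp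
  next
    case False
    then show ?thesis using W_unit[OF psi_car, of i] phiW[OF i False] p(1) i by auto
  qed
  have m: "\<rho> = mat d d (\<lambda>(a, b). \<Sum>i<k. complex_of_real (p i) * (\<psi> i $ a) * cnj (\<psi> i $ b))"
  proof (rule eq_matI)
    fix x y assume "x < dim_row (mat d d (\<lambda>(a, b). \<Sum>i<k. complex_of_real (p i) * (\<psi> i $ a) * cnj (\<psi> i $ b)))"
      "y < dim_col (mat d d (\<lambda>(a, b). \<Sum>i<k. complex_of_real (p i) * (\<psi> i $ a) * cnj (\<psi> i $ b)))"
    then have xy: "x < d" "y < d" by auto
    have "\<rho> $$ (x,y) = ?R $$ (x*d+x, y*d+y)"
      using WrW[OF rc kk_less[OF xy(1)] kk_less[OF xy(2)]] xy by simp
    also have "\<dots> = (\<Sum>i<k. complex_of_real (p i) * (\<phi> i $ (x*d+x)) * cnj (\<phi> i $ (y*d+y)))"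
      by (rule Rent[OF kk_less[OF xy(1)] kk_less[OF xy(2)]])
    also have "\<dots> = (\<Sum>i<k. complex_of_real (p i) * (\<psi> i $ x) * cnj (\<psi> i $ y))"
      using xy by (intro sum.cong) (auto simp: \<psi>_def)
    finally show "\<rho> $$ (x,y) = mat d d (\<lambda>(a, b). \<Sum>i<k. complex_of_real (p i) * (\<psi> i $ a) * cnj (\<psi> i $ b)) $$ (x,y)"
      using xy by simp
  qed (use rc in auto)
  have "pure_decomp d \<rho> k p \<psi>" unfolding pure_decomp_def using p u m by blast
  moreover have "(\<Sum>i<k. p i * LE_pure d (\<phi> i)) = (\<Sum>i<k. p i * LC_pure (\<psi> i))"
  proof (rule sum.cong[OF refl])
    fix i assume "i \<in> {..<k}"
    then have i: "i < k" by simp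
    show "p i * LE_pure d (\<phi> i) = p i * LC_pure (\<psi> i)"
    proof (cases "p i = 0")
      case False
      then show ?thesis using phiW[OF i False] W_LE[OF psi_car] by simp
    qed simp
  qed
  ultimately show ?thesis by blast
qed

theorem proposition6:
  fixes d :: nat
  shows "\<exists>W \<in> carrier_mat (d * d) d. mat_adjoint W * W = 1\<^sub>m d \<and>
           (\<forall>\<rho>. density_mat d \<rho> \<longrightarrow> LC d \<rho> = LE d (W * \<rho> * mat_adjoint W))"
proof (intro bexI[of _ "Wm d"] conjI allI impI)
  show "Wm d \<in> carrier_mat (d * d) d" by (rule W_carrier)
  show "mat_adjoint (Wm d) * Wm d = 1\<^sub>m d" by (rule W_iso)
  fix \<rho> assume "density_mat d \<rho>"
  then have rc: "\<rho> \<in> carrier_mat d d" unfolding density_mat_def by simp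
  let ?R = "Wm d * \<rho> * mat_adjoint (Wm d)"
  have "{(\<Sum>i<k. p i * LC_pure (\<psi> i)) | k p \<psi>. pure_decomp d \<rho> k p \<psi>}
      = {(\<Sum>i<k. p i * LE_pure d (\<psi> i)) | k p \<psi>. pure_decomp (d * d) ?R k p \<psi>}"
  proof
    show "{(\<Sum>i<k. p i * LC_pure (\<psi> i)) | k p \<psi>. pure_decomp d \<rho> k p \<psi>}
      \<subseteq> {(\<Sum>i<k. p i * LE_pure d (\<psi> i)) | k p \<psi>. pure_decomp (d * d) ?R k p \<psi>}"
    proof
      fix x assume "x \<in> {(\<Sum>i<k. p i * LC_pure (\<psi> i)) | k p \<psi>. pure_decomp d \<rho> k p \<psi>}"
      then obtain k p \<psi> where x: "x = (\<Sum>i<k. p i * LC_pure (\<psi> i))" and pd: "pure_decomp d \<rho> k p \<psi>"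
        by blast
      have car: "\<psi> i \<in> carrier_vec d" if "i < k" for i
        using pd that unfolding pure_decomp_def unit_vec_c_def by auto
      have "x = (\<Sum>i<k. p i * LE_pure d (Wm d *\<^sub>v \<psi> i))"
        unfolding x using car W_LE by (intro sum.cong) auto
      moreover have "pure_decomp (d * d) ?R k p (\<lambda>i. Wm d *\<^sub>v \<psi> i)" by (rule dir1[OF rc pd])
      ultimately have "\<exists>k' p' \<psi>'. x = (\<Sum>i<k'. p' i * LE_pure d (\<psi>' i)) \<and> pure_decomp (d * d) ?R k' p' \<psi>'"
        by (intro exI[of _ k] exI[of _ p] exI[of _ "\<lambda>i. Wm d *\<^sub>v \<psi> i"] conjI)
      then show "x \<in> {(\<Sum>i<k. p i * LE_pure d (\<psi> i)) | k p \<psi>. pure_decomp (d * d) ?R k p \<psi>}"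
        by (simp only: mem_Collect_eq)
    qed
  next
    show "{(\<Sum>i<k. p i * LE_pure d (\<psi> i)) | k p \<psi>. pure_decomp (d * d) ?R k p \<psi>}
      \<subseteq> {(\<Sum>i<k. p i * LC_pure (\<psi> i)) | k p \<psi>. pure_decomp d \<rho> k p \<psi>}"
    proof
      fix x assume "x \<in> {(\<Sum>i<k. p i * LE_pure d (\<psi> i)) | k p \<psi>. pure_decomp (d * d) ?R k p \<psi>}"
      then obtain k p \<phi> where x: "x = (\<Sum>i<k. p i * LE_pure d (\<phi> i))" and pd: "pure_decomp (d * d) ?R k p \<phi>"
        by blast
      from dir2[OF rc pd] obtain \<psi> where "pure_decomp d \<rho> k p \<psi>" "x = (\<Sum>i<k. p i * LC_pure (\<psi> i))"
        using x by auto
      then show "x \<in> {(\<Sum>i<k. p i * LC_pure (\<psi> i)) | k p \<psi>. pure_decomp d \<rho> k p \<psi>}" by blast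
    qed
  qed
  then show "LC d \<rho> = LE d ?R" unfolding LC_def LE_def by simp
qed

end
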